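(* Let $f:\mathbb{R}_+\to\mathbb{R}_+$ and $g:\mathbb{R}^2\to\mathbb{R}_+$ be non-negative, $g$ symmetric, and $\kappa(t,x,y)=1\wedge f(t)g(x,y)$. Let $W^{(1)},W^{(2)}$ be i.i.d. copies of a real random variable $W$. Assume (1) there are $\alpha_p>1$ and $t_1\ge0$ with $f(t)\le t^{-\alpha_p}$ for all $t>t_1$, and (2) there are $\beta_p>0$ and $t_2\ge0$ with $\mathbb{P}(g(W^{(1)},W^{(2)})>t)\le t^{-\beta_p}$ for all $t>t_2$. Then for every $\epsilon>0$ there is $t_0=t_0(\epsilon)>0$ such that for all $t>t_0$, $$\mathbb{E}\big[\kappa(t,W^{(1)},W^{(2)})\big]\le t^{-\min\{\alpha_p,\alpha_p\beta_p\}+\epsilon}.$$ *)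

theory Defs
  imports "HOL-Probability.Probability"
begin

definition kappa :: "(real \<Rightarrow> real) \<Rightarrow> (real \<Rightarrow> real \<Rightarrow> real) \<Rightarrow> real \<Rightarrow> real \<Rightarrow> real \<Rightarrow> real" where
  "kappa f g t x y = min 1 (f t * g x y)"

end

theory Submission
  imports Defs
begin

theorem lemma2p3:
  fixes M :: "'a measure" and f :: "real \<Rightarrow> real" and g :: "real \<Rightarrow> real \<Rightarrow> real"
    and W1 W2 :: "'a \<Rightarrow> real" and \<alpha> \<beta> t1 t2 :: real
  assumes "prob_space M"
    and f_nonneg: "\<forall>t\<ge>0. f t \<ge> 0"
    and g_nonneg: "\<forall>x y. g x y \<ge> 0"
    and g_sym: "\<forall>x y. g x y = g y x"
    and g_meas: "(\<lambda>(x, y). g x y) \<in> borel_measurable borel"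
    and W1_rv: "W1 \<in> borel_measurable M"
    and W2_rv: "W2 \<in> borel_measurable M"
    and indep: "prob_space.indep_var M borel W1 borel W2"
    and ident: "distr M borel W1 = distr M borel W2"
    and \<alpha>: "\<alpha> > 1" "t1 \<ge> 0" "\<forall>t>t1. f t \<le> t powr (-\<alpha>)"
    and \<beta>: "\<beta> > 0" "t2 \<ge> 0"
      "\<forall>t>t2. measure M {\<omega> \<in> space M. g (W1 \<omega>) (W2 \<omega>) > t} \<le> t powr (-\<beta>)"
  shows "\<forall>\<epsilon>>0. \<exists>t0>0. \<forall>t>t0.
           (\<integral>\<omega>. kappa f g t (W1 \<omega>) (W2 \<omega>) \<partial>M) \<le> t powr (- min \<alpha> (\<alpha> * \<beta>) + \<epsilon>)"
proof (intro allI impI)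
  fix \<epsilon> :: real assume \<epsilon>: "\<epsilon> > 0"
  interpret P: prob_space M by fact
  define \<mu> where "\<mu> = min \<alpha> (\<alpha> * \<beta>)"
  define G where "G = (\<lambda>\<omega>. g (W1 \<omega>) (W2 \<omega>))"
  have G_meas: "G \<in> borel_measurable M"
  proof -
    have "(\<lambda>\<omega>. (W1 \<omega>, W2 \<omega>)) \<in> borel_measurable M"
      using W1_rv W2_rv by (rule borel_measurable_Pair)
    from measurable_comp[OF this g_meas] show ?thesis
      unfolding G_def by (simp add: o_def)
  qed
  have G_nn: "\<And>\<omega>. G \<omega> \<ge> 0" using g_nonneg by (simp add: G_def)
  obtain N :: nat where N0: "max 1 (2 * \<alpha> / \<epsilon>) \<le> real N" by (meson real_arch_simple)
  have N1: "N \<ge> 1" and N2: "2 * \<alpha> / \<epsilon> \<le> real N" using N0 by auto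
  have aN: "\<alpha> / N \<le> \<epsilon> / 2"
    using N1 N2 \<epsilon> \<alpha>(1) by (simp add: field_simps)
  define t0 where "t0 = max (max 1 t1) (max ((N+1) powr (2/\<epsilon>)) ((t2+1) powr (N/\<alpha>)))"
  show "\<exists>t0>0. \<forall>t>t0. (\<integral>\<omega>. kappa f g t (W1 \<omega>) (W2 \<omega>) \<partial>M) \<le> t powr (- min \<alpha> (\<alpha> * \<beta>) + \<epsilon>)"
  proof (intro exI[of _ t0] conjI allI impI)
    show "t0 > 0" unfolding t0_def by auto
    fix t assume tt0: "t > t0"
    have t1': "t > 1" "t > t1" using tt0 unfolding t0_def by auto
    have tN: "t > (N+1) powr (2/\<epsilon>)" and tT2: "t > (t2+1) powr (N/\<alpha>)" using tt0 unfolding t0_def by auto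
    define s where "s = t powr (-\<alpha>)"
    define K where "K i = t powr (\<alpha> * real i / real N)" for i :: nat
    define A where "A i = {\<omega>\<in>space M. K i < G \<omega>}" for i
    define h where "h \<omega> = t powr (-\<alpha> + \<alpha>/N) + (\<Sum>i\<in>{1..<N}. t powr (-\<alpha> + \<alpha>*(i+1)/N) * indicator (A i) \<omega>) + indicator (A N) \<omega>" for \<omega>
    have A_sets: "A i \<in> sets M" for i
      unfolding A_def using G_meas by measurable
    have K_mono: "K i \<le> K j" if "i \<le> j" for i j
      unfolding K_def using t1' that \<alpha>(1) N1
      by (intro powr_mono) (auto simp: divide_right_mono mult_left_mono)
    have sK: "s * K i = t powr (-\<alpha> + \<alpha> * i / N)" for i
      unfolding s_def K_def by (simp add: powr_add[symmetric])
    have KN: "K N = t powr \<alpha>" unfolding K_def using N1 by simp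
    have ft: "0 \<le> f t" "f t \<le> s" using f_nonneg \<alpha>(3) t1' unfolding s_def by auto
    have pointwise: "kappa f g t (W1 \<omega>) (W2 \<omega>) \<le> h \<omega>" if \<omega>: "\<omega> \<in> space M" for \<omega>
    proof -
      have nnsum: "0 \<le> (\<Sum>i\<in>{1..<N}. t powr (-\<alpha> + \<alpha>*(i+1)/N) * indicator (A i) \<omega>)"
        by (intro sum_nonneg) auto
      have k1: "kappa f g t (W1 \<omega>) (W2 \<omega>) \<le> min 1 (s * G \<omega>)"
        unfolding kappa_def using mult_right_mono[OF ft(2) G_nn[of \<omega>]]
        by (auto simp: G_def min_def)
      consider "G \<omega> \<le> K 1" | "G \<omega> > K N" | "K 1 < G \<omega>" "G \<omega> \<le> K N" by linarith
      then show ?thesis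
      proof cases
        case 1
        have "min 1 (s * G \<omega>) \<le> s * K 1"
          using 1 unfolding s_def by (simp add: mult_left_mono min.coboundedI2)
        also have "\<dots> = t powr (-\<alpha> + \<alpha>/N)" by (simp add: sK)
        finally have X: "min 1 (s * G \<omega>) \<le> t powr (-\<alpha> + \<alpha>/N)" .
        have "0 \<le> (indicator (A N) \<omega> :: real)" by simp
        then show ?thesis using k1 X nnsum unfolding h_def by linarith
      next
        case 2
        then have "indicator (A N) \<omega> = (1::real)" using \<omega> unfolding A_def by simp
        moreover have "min 1 (s * G \<omega>) \<le> 1" by simp
        moreover have "0 \<le> t powr (-\<alpha> + \<alpha>/N)" by simp
        ultimately show ?thesis using k1 nnsum unfolding h_def by linarith
      next
        case 3
        define S where "S = {i\<in>{1..N}. K i < G \<omega>}"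
        define j where "j = Max S"
        have Sfin: "finite S" and Sne: "1 \<in> S" using 3 N1 unfolding S_def by auto
        have jS: "j \<in> S" unfolding j_def using Sfin Sne by (intro Max_in) auto
        have jN: "j < N" using jS 3 unfolding S_def by (cases "j = N") auto
        have j1: "j \<ge> 1" using jS unfolding S_def by auto
        have Kj1: "G \<omega> \<le> K (j+1)"
        proof (rule ccontr)
          assume "\<not> G \<omega> \<le> K (j+1)"
          then have "j+1 \<in> S" using jN unfolding S_def by auto
          then have "j + 1 \<le> j" unfolding j_def using Sfin by (intro Max_ge) auto
          then show False by simp
        qed
        have indj: "indicator (A j) \<omega> = (1::real)" using \<omega> jS unfolding A_def S_def by simp
        have "min 1 (s * G \<omega>) \<le> s * K (j+1)"
          using Kj1 unfolding s_def by (simp add: mult_left_mono min.coboundedI2)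
        also have "\<dots> = t powr (-\<alpha> + \<alpha>*(j+1)/N) * indicator (A j) \<omega>"
          using indj by (simp add: sK)
        also have "\<dots> \<le> (\<Sum>i\<in>{1..<N}. t powr (-\<alpha> + \<alpha>*(i+1)/N) * indicator (A i) \<omega>)"
          using j1 jN by (intro member_le_sum) auto
        finally have X: "min 1 (s * G \<omega>) \<le> (\<Sum>i\<in>{1..<N}. t powr (-\<alpha> + \<alpha>*(i+1)/N) * indicator (A i) \<omega>)" .
        have "0 \<le> (indicator (A N) \<omega> :: real)" "0 \<le> t powr (-\<alpha> + \<alpha>/N)" by simp_all
        then show ?thesis using k1 X unfolding h_def by linarith
      qed
    qed
    have int_ind: "integrable M (indicator (A i) :: 'a \<Rightarrow> real)" for i
      using A_sets by (intro integrable_real_indicator) (auto simp: less_top[symmetric])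
    define S where "S \<omega> = (\<Sum>i\<in>{1..<N}. t powr (-\<alpha> + \<alpha>*(i+1)/N) * indicator (A i) \<omega>)" for \<omega>
    have intS: "integrable M S"
      unfolding S_def[abs_def]
      by (rule Bochner_Integration.integrable_sum, rule integrable_mult_right, rule int_ind)
    have intcS: "integrable M (\<lambda>\<omega>. t powr (-\<alpha> + \<alpha>/N) + S \<omega>)"
      by (rule Bochner_Integration.integrable_add[OF P.integrable_const intS])
    have h_eq: "h = (\<lambda>\<omega>. (t powr (-\<alpha> + \<alpha>/N) + S \<omega>) + indicator (A N) \<omega>)"
      unfolding h_def[abs_def] S_def by simp
    have int_h: "integrable M h"
      unfolding h_eq by (rule Bochner_Integration.integrable_add[OF intcS int_ind])
    have AiS: "A i \<inter> space M = A i" for i unfolding A_def by auto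
    have intSeq: "integral\<^sup>L M S = (\<Sum>i\<in>{1..<N}. t powr (-\<alpha> + \<alpha>*(i+1)/N) * measure M (A i))"
      unfolding S_def[abs_def]
      by (subst Bochner_Integration.integral_sum) (auto intro: int_ind simp: AiS)
    have hEq: "integral\<^sup>L M h = t powr (-\<alpha> + \<alpha>/N) + (\<Sum>i\<in>{1..<N}. t powr (-\<alpha> + \<alpha>*(i+1)/N) * measure M (A i)) + measure M (A N)"
      unfolding h_eq
      by (simp only: Bochner_Integration.integral_add[OF intcS int_ind] Bochner_Integration.integral_add[OF P.integrable_const intS] intSeq Bochner_Integration.integral_indicator AiS lebesgue_integral_const P.prob_space scaleR_one)
    have int_k: "integrable M (\<lambda>\<omega>. kappa f g t (W1 \<omega>) (W2 \<omega>))"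
    proof (rule P.integrable_const_bound[where B=1])
      show "AE \<omega> in M. norm (kappa f g t (W1 \<omega>) (W2 \<omega>)) \<le> 1"
        unfolding kappa_def using ft G_nn by (auto simp: G_def)
      show "(\<lambda>\<omega>. kappa f g t (W1 \<omega>) (W2 \<omega>)) \<in> borel_measurable M"
        unfolding kappa_def using G_meas unfolding G_def by measurable
    qed
    have "(\<integral>\<omega>. kappa f g t (W1 \<omega>) (W2 \<omega>) \<partial>M) \<le> integral\<^sup>L M h"
      using int_k int_h pointwise by (intro integral_mono) auto
    also have "integral\<^sup>L M h = t powr (-\<alpha> + \<alpha>/N) + (\<Sum>i\<in>{1..<N}. t powr (-\<alpha> + \<alpha>*(i+1)/N) * measure M (A i)) + measure M (A N)"
      by (rule hEq)
    also have "\<dots> \<le> real (N+1) * t powr (-\<mu> + \<alpha>/N)"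
    proof -
      define B where "B = t powr (-\<mu> + \<alpha>/N)"
      have mu: "\<mu> \<le> \<alpha>" "\<mu> \<le> \<alpha> * \<beta>" unfolding \<mu>_def by auto
      have K1: "K 1 > t2"
      proof -
        have "((t2+1) powr (N/\<alpha>)) powr (\<alpha>/N) < t powr (\<alpha>/N)"
          using tT2 \<alpha>(1) N1 \<beta>(2) by (intro powr_less_mono2) auto
        moreover have "((t2+1) powr (N/\<alpha>)) powr (\<alpha>/N) = t2 + 1"
          using \<alpha>(1) N1 \<beta>(2) by (simp add: powr_powr)
        ultimately show ?thesis unfolding K_def by simp
      qed
      have mA: "measure M (A i) \<le> t powr (- (\<alpha> * \<beta> * i / N))" if "i \<ge> 1" for i
      proof -
        have Ki: "K i > t2" using K1 K_mono[OF that] by simp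
        have "measure M (A i) \<le> K i powr (-\<beta>)"
          using \<beta>(3) Ki unfolding A_def G_def by auto
        also have "\<dots> = t powr (- (\<alpha> * \<beta> * i / N))"
          unfolding K_def by (simp add: powr_powr mult_ac)
        finally show ?thesis .
      qed
      have b1: "t powr (-\<alpha> + \<alpha>/N) \<le> B"
        unfolding B_def using t1' mu by (intro powr_mono) auto
      have b2: "t powr (-\<alpha> + \<alpha>*(i+1)/N) * measure M (A i) \<le> B" if "i \<in> {1..<N}" for i
      proof -
        have x: "0 \<le> real i / N" "real i / N \<le> 1" using that by auto
        have e: "\<mu> * (1 - real i / N) \<le> \<alpha> * (1 - real i / N)" "\<mu> * (real i / N) \<le> \<alpha> * \<beta> * (real i / N)"
          using x mu by (intro mult_right_mono; simp)+
        have "t powr (-\<alpha> + \<alpha>*(i+1)/N) * measure M (A i) \<le> t powr (-\<alpha> + \<alpha>*(i+1)/N) * t powr (- (\<alpha> * \<beta> * i / N))"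
          using mA[of i] that by (intro mult_left_mono) auto
        also have "\<dots> = t powr (-\<alpha> + \<alpha>*(i+1)/N - \<alpha> * \<beta> * i / N)"
          by (simp add: powr_add[symmetric])
        also have "\<dots> \<le> B"
        proof -
          define x where "x = real i / N"
          have ex: "-\<alpha> + \<alpha>*(i+1)/N - \<alpha>*\<beta>*i/N = -\<alpha> + \<alpha>*x + \<alpha>/N - \<alpha>*\<beta>*x"
            unfolding x_def by (simp add: field_simps add_divide_distrib)
          have e1: "\<mu> - \<mu>*x \<le> \<alpha> - \<alpha>*x" "\<mu>*x \<le> \<alpha>*\<beta>*x"
            using e unfolding x_def by (simp_all add: algebra_simps)
          show ?thesis unfolding B_def ex using t1' e1
            by (intro powr_mono) auto
        qed
        finally show ?thesis .
      qed
      have b3: "measure M (A N) \<le> B"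
      proof -
        have "measure M (A N) \<le> t powr (- (\<alpha> * \<beta> * N / N))" using mA[OF N1] N1 by simp
        also have "\<dots> \<le> B"
        proof -
          have "0 \<le> \<alpha> / real N" using \<alpha>(1) by simp
          then show ?thesis unfolding B_def using t1' mu N1
            by (intro powr_mono) auto
        qed
        finally show ?thesis .
      qed
      have "(\<Sum>i\<in>{1..<N}. t powr (-\<alpha> + \<alpha>*(i+1)/N) * measure M (A i)) \<le> real (card {1..<N}) * B"
        using b2 by (intro sum_bounded_above) auto
      also have "\<dots> = (real N - 1) * B" using N1 by (simp add: of_nat_diff)
      finally have "(\<Sum>i\<in>{1..<N}. t powr (-\<alpha> + \<alpha>*(i+1)/N) * measure M (A i)) \<le> (real N - 1) * B" .
      with b1 b3 show ?thesis unfolding B_def by (simp add: algebra_simps)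
    qed
    also have "\<dots> \<le> t powr (\<epsilon>/2) * t powr (-\<mu> + \<epsilon>/2)"
    proof (rule mult_mono)
      have "((N+1) powr (2/\<epsilon>)) powr (\<epsilon>/2) < t powr (\<epsilon>/2)"
        using tN \<epsilon> by (intro powr_less_mono2) auto
      moreover have "((N+1) powr (2/\<epsilon>)) powr (\<epsilon>/2) = real (N + 1)"
        using \<epsilon> by (simp add: powr_powr)
      ultimately show "real (N+1) \<le> t powr (\<epsilon>/2)" by simp
      show "t powr (-\<mu> + \<alpha>/N) \<le> t powr (-\<mu> + \<epsilon>/2)"
        using t1' aN by (intro powr_mono) auto
    qed auto
    also have "\<dots> = t powr (- min \<alpha> (\<alpha> * \<beta>) + \<epsilon>)"
      unfolding \<mu>_def by (simp add: powr_add[symmetric])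
    finally show "(\<integral>\<omega>. kappa f g t (W1 \<omega>) (W2 \<omega>) \<partial>M) \<le> t powr (- min \<alpha> (\<alpha> * \<beta>) + \<epsilon>)" .
  qed
qed

end
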